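(* Let $\psi:\mathsf{Pol}\to\mathsf{N}$ be a linear map with $\psi(1)=\psi(x_i)=0$ for $1\le i\le n$, and let $\phi:\mathsf{N}\times\mathsf{N}\to\mathsf{N}$ be a bidifferential operator vanishing on constants (i.e. $\phi(c,f)=\phi(f,c)=0$ for constants $c$). Suppose that for every $k\ge2$ and every choice of indices $i_1,\dots,i_k\in\{1,\dots,n\}$, $$\sum_{(i_1,\ldots,i_k)}\delta\psi(x_{i_1},x_{i_2}\cdots x_{i_k})=\sum_{(i_1,\ldots,i_k)}\phi(x_{i_1},x_{i_2}\cdots x_{i_k}).$$ Then $\psi$ is the restriction to $\mathsf{Pol}$ of a differential operator on $\mathsf{N}$ vanishing on constants.
   Context: $\mathsf{N}=C^\infty(\mathbb{R}^n)$ with coordinates $x_1,\dots,x_n$, $\mathsf{Pol}=\mathbb{R}[x_1,\dots,x_n]$. The Hochschild coboundary of a linear map $\psi$ is $\delta\psi(f,g)=f\psi(g)-\psi(fg)+\psi(f)g$. For a function $F$ of $k$ arguments, $\sum_{(i_1,\ldots,i_k)}F(x_{i_1},\ldots,x_{i_k})$ denotes the sum over the $k$ cyclic permutations of $(x_{i_1},\ldots,x_{i_k})$; here the arguments are $x_{i_1}$ and the product $x_{i_2}\cdots x_{i_k}$ of the remaining cyclically ordered variables. *)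

theory Defs
  imports "HOL-Analysis.Analysis"
begin

text \<open>Functions on R^n are modelled as functions on real^'n (n = CARD('n)).\<close>

definition partial :: "'n::finite \<Rightarrow> (real^'n \<Rightarrow> real) \<Rightarrow> real^'n \<Rightarrow> real" where
  "partial i f x = deriv (\<lambda>t. f (x + t *\<^sub>R axis i 1)) 0"

fun dword :: "'n::finite list \<Rightarrow> (real^'n \<Rightarrow> real) \<Rightarrow> real^'n \<Rightarrow> real" where
  "dword [] f = f"
| "dword (i # w) f = partial i (dword w f)"

definition smooth :: "(real^'n::finite \<Rightarrow> real) \<Rightarrow> bool" where
  "smooth f \<longleftrightarrow> (\<forall>w x. dword w f differentiable (at x))"

definition mono_fun :: "('n::finite \<Rightarrow> nat) \<Rightarrow> real^'n \<Rightarrow> real" where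
  "mono_fun \<alpha> x = (\<Prod>i\<in>UNIV. (x $ i) ^ (\<alpha> i))"

definition is_pol :: "(real^'n::finite \<Rightarrow> real) \<Rightarrow> bool" where
  "is_pol p \<longleftrightarrow> (\<exists>S c. finite S \<and> p = (\<lambda>x. \<Sum>\<alpha>\<in>S. c \<alpha> * mono_fun \<alpha> x))"

definition diff_op :: "'n::finite list set \<Rightarrow> ('n list \<Rightarrow> real^'n \<Rightarrow> real)
    \<Rightarrow> (real^'n \<Rightarrow> real) \<Rightarrow> real^'n \<Rightarrow> real" where
  "diff_op W a f x = (\<Sum>w\<in>W. a w x * dword w f x)"

definition bidiff_op :: "('n::finite list \<times> 'n list) set \<Rightarrow> ('n list \<times> 'n list \<Rightarrow> real^'n \<Rightarrow> real)
    \<Rightarrow> (real^'n \<Rightarrow> real) \<Rightarrow> (real^'n \<Rightarrow> real) \<Rightarrow> real^'n \<Rightarrow> real" where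
  "bidiff_op W a f g x = (\<Sum>(u,v)\<in>W. a (u,v) x * dword u f x * dword v g x)"

definition hoch :: "((real^'n::finite \<Rightarrow> real) \<Rightarrow> (real^'n \<Rightarrow> real))
    \<Rightarrow> (real^'n \<Rightarrow> real) \<Rightarrow> (real^'n \<Rightarrow> real) \<Rightarrow> real^'n \<Rightarrow> real" where
  "hoch \<psi> f g x = f x * \<psi> g x - \<psi> (\<lambda>y. f y * g y) x + \<psi> f x * g x"

definition coord :: "'n::finite \<Rightarrow> real^'n \<Rightarrow> real" where
  "coord i x = x $ i"

definition coord_prod :: "'n::finite list \<Rightarrow> real^'n \<Rightarrow> real" where
  "coord_prod l x = prod_list (map (\<lambda>i. x $ i) l)"

text \<open>Cyclic sum over the k rotations of the index list: first argument x_{i1},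
  second argument the product of the remaining variables.\<close>
definition cyc_sum :: "((real^'n::finite \<Rightarrow> real) \<Rightarrow> (real^'n \<Rightarrow> real) \<Rightarrow> real^'n \<Rightarrow> real)
    \<Rightarrow> 'n list \<Rightarrow> real^'n \<Rightarrow> real" where
  "cyc_sum F is x = (\<Sum>j<length is. F (coord (hd (rotate j is))) (coord_prod (tl (rotate j is))) x)"

end

theory Submission
  imports Defs
begin

definition dec :: "'n \<Rightarrow> ('n \<Rightarrow> nat) \<Rightarrow> ('n \<Rightarrow> nat)" where
  "dec i \<beta> = \<beta>(i := \<beta> i - 1)"

lemma mono_deriv:
  fixes x :: "real^'n::finite"
  shows "((\<lambda>t. mono_fun \<beta> (x + t *\<^sub>R axis i 1)) has_real_derivative
          (real (\<beta> i) * mono_fun (dec i \<beta>) x)) (at 0)"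
proof -
  let ?C = "\<Prod>j\<in>UNIV-{i}. (x $ j) ^ \<beta> j"
  have eq: "(\<lambda>t. mono_fun \<beta> (x + t *\<^sub>R axis i 1)) = (\<lambda>t. (x $ i + t) ^ \<beta> i * ?C)"
  proof
    fix t
    have "mono_fun \<beta> (x + t *\<^sub>R axis i 1) = (x $ i + t) ^ \<beta> i * (\<Prod>j\<in>UNIV-{i}. ((x + t *\<^sub>R axis i 1) $ j) ^ \<beta> j)"
      unfolding mono_fun_def by (simp add: prod.remove[of UNIV i])
    also have "(\<Prod>j\<in>UNIV-{i}. ((x + t *\<^sub>R axis i 1) $ j) ^ \<beta> j) = ?C"
      by (rule prod.cong) (auto simp: axis_def)
    finally show "mono_fun \<beta> (x + t *\<^sub>R axis i 1) = (x $ i + t) ^ \<beta> i * ?C" .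
  qed
  have r: "mono_fun (dec i \<beta>) x = (x $ i) ^ (\<beta> i - 1) * ?C"
    unfolding mono_fun_def dec_def
    by (simp add: prod.remove[of UNIV i])
  show ?thesis unfolding eq r
    by (auto intro!: derivative_eq_intros)
qed

definition deg :: "('n::finite \<Rightarrow> nat) \<Rightarrow> nat" where
  "deg \<beta> = (\<Sum>i\<in>UNIV. \<beta> i)"

fun dg :: "'n list \<Rightarrow> ('n \<Rightarrow> nat) \<Rightarrow> ('n \<Rightarrow> nat)" where
  "dg [] \<beta> = \<beta>"
| "dg (i # w) \<beta> = dec i (dg w \<beta>)"

fun dk :: "'n list \<Rightarrow> ('n \<Rightarrow> nat) \<Rightarrow> real" where
  "dk [] \<beta> = 1"
| "dk (i # w) \<beta> = dk w \<beta> * real (dg w \<beta> i)"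

lemma partial_PS:
  assumes "finite S"
  shows "partial i (\<lambda>x. \<Sum>\<alpha>\<in>S. d \<alpha> * mono_fun (g \<alpha>) x)
       = (\<lambda>x. \<Sum>\<alpha>\<in>S. (d \<alpha> * real (g \<alpha> i)) * mono_fun (dec i (g \<alpha>)) x)"
proof
  fix x
  have "((\<lambda>t. \<Sum>\<alpha>\<in>S. d \<alpha> * mono_fun (g \<alpha>) (x + t *\<^sub>R axis i 1)) has_real_derivative
         (\<Sum>\<alpha>\<in>S. d \<alpha> * (real (g \<alpha> i) * mono_fun (dec i (g \<alpha>)) x))) (at 0)"
    by (intro DERIV_sum DERIV_cmult mono_deriv)
  then show "partial i (\<lambda>x. \<Sum>\<alpha>\<in>S. d \<alpha> * mono_fun (g \<alpha>) x) x
       = (\<Sum>\<alpha>\<in>S. (d \<alpha> * real (g \<alpha> i)) * mono_fun (dec i (g \<alpha>)) x)"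
    unfolding partial_def by (simp add: DERIV_imp_deriv mult.assoc)
qed

lemma dword_PS:
  assumes "finite S"
  shows "dword w (\<lambda>x. \<Sum>\<alpha>\<in>S. d \<alpha> * mono_fun (g \<alpha>) x)
       = (\<lambda>x. \<Sum>\<alpha>\<in>S. (d \<alpha> * dk w (g \<alpha>)) * mono_fun (dg w (g \<alpha>)) x)"
proof (induction w)
  case Nil
  then show ?case by simp
next
  case (Cons i w)
  show ?case by (simp only: dword.simps Cons.IH partial_PS[OF assms]) (simp add: mult.assoc)
qed

lemma mono_single: "mono_fun \<beta> = (\<lambda>x. \<Sum>\<alpha>\<in>{\<beta>}. 1 * mono_fun (id \<alpha>) x)"
  by simp

lemma dword_mono: "dword w (mono_fun \<beta>) = (\<lambda>x. dk w \<beta> * mono_fun (dg w \<beta>) x)"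
  by (subst mono_single, subst dword_PS) auto

lemma partial_mono: "partial i (mono_fun \<beta>) = (\<lambda>x. real (\<beta> i) * mono_fun (dec i \<beta>) x)"
  using dword_mono[of "[i]" \<beta>] by simp

lemma dword_smult_mono: "dword w (\<lambda>x. c * mono_fun \<beta> x) = (\<lambda>x. c * dword w (mono_fun \<beta>) x)"
proof -
  have e: "(\<lambda>x. c * mono_fun \<beta> x) = (\<lambda>x. \<Sum>\<alpha>\<in>{\<beta>}. c * mono_fun (id \<alpha>) x)" by simp
  show ?thesis by (subst e, subst dword_PS) (auto simp: dword_mono)
qed

lemma dword_lin:
  assumes "finite S"
  shows "dword w (\<lambda>x. \<Sum>\<alpha>\<in>S. c \<alpha> * mono_fun \<alpha> x) x = (\<Sum>\<alpha>\<in>S. c \<alpha> * dword w (mono_fun \<alpha>) x)"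
  using dword_PS[OF assms, of w c id] by (simp add: dword_mono mult.assoc)

lemma mono_diff: "mono_fun \<beta> differentiable (at x)"
  unfolding mono_fun_def differentiable_def
  by (rule exI, rule has_derivative_prod, rule has_derivative_power,
      rule bounded_linear.has_derivative[OF bounded_linear_vec_nth], rule has_derivative_ident)

lemma smooth_mono: "smooth (mono_fun \<beta>)"
  unfolding smooth_def dword_mono
  by (auto intro: differentiable_mult mono_diff)

lemma coord_mono: "coord i = mono_fun (\<lambda>j. if j = i then 1 else 0)"
  by (auto simp: coord_def mono_fun_def fun_eq_iff power_0 if_distrib prod.If_cases)

lemma const_mono: "(\<lambda>x. 1) = mono_fun (\<lambda>j. 0)"
  by (simp add: mono_fun_def fun_eq_iff)

lemma partial_const: "partial i (\<lambda>x. c) = (\<lambda>x. 0)"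
  unfolding partial_def by simp

lemma dword_const: "dword w (\<lambda>x. c) = (\<lambda>x. if w = [] then c else 0)"
  by (induction w) (auto simp: partial_const)

lemma partial_coord: "partial l (coord i) = (\<lambda>x. if l = i then 1 else 0)"
proof (cases "l = i")
  case True
  have "(\<lambda>j. if j = i then 1 else 0 :: nat)(i := 0) = (\<lambda>j. 0)" by auto
  then show ?thesis using True
    by (simp add: coord_mono partial_mono dec_def flip: const_mono)
next
  case False
  then show ?thesis by (simp add: coord_mono partial_mono)
qed

lemma dword_coord: "dword u (coord i) = (\<lambda>x. if u = [] then x $ i else if u = [i] then 1 else 0)"
proof (induction u)
  case Nil
  then show ?case by (simp add: coord_def)
next
  case (Cons l w)
  show ?case
  proof (cases "w = []")
    case True
    then show ?thesis by (simp add: partial_coord)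
  next
    case False
    then show ?thesis using Cons by (simp add: partial_const)
  qed
qed

lemma smooth_coord: "smooth (coord i)"
  by (simp add: coord_mono smooth_mono)

lemma partial_cmult:
  assumes "\<And>y. F differentiable (at y)"
  shows "partial i (\<lambda>x. c * F x) = (\<lambda>x. c * partial i F x)"
proof
  fix x
  have "(\<lambda>t. x + t *\<^sub>R axis i (1::real)) differentiable (at 0)"
    by (auto intro!: derivative_intros)
  then have "(F \<circ> (\<lambda>t. x + t *\<^sub>R axis i 1)) differentiable (at 0)"
    by (rule differentiable_chain_at) (rule assms)
  then have "DERIV (\<lambda>t. F (x + t *\<^sub>R axis i 1)) 0 :> deriv (\<lambda>t. F (x + t *\<^sub>R axis i 1)) 0"
    by (simp add: DERIV_deriv_iff_real_differentiable o_def)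
  then have "DERIV (\<lambda>t. c * F (x + t *\<^sub>R axis i 1)) 0 :> c * deriv (\<lambda>t. F (x + t *\<^sub>R axis i 1)) 0"
    by (rule DERIV_cmult)
  then show "partial i (\<lambda>x. c * F x) x = c * partial i F x"
    unfolding partial_def by (rule DERIV_imp_deriv)
qed

lemma dword_cmult:
  assumes "smooth F"
  shows "dword w (\<lambda>x. c * F x) = (\<lambda>x. c * dword w F x)"
proof (induction w)
  case Nil
  then show ?case by simp
next
  case (Cons i w)
  have "\<And>y. dword w F differentiable (at y)" using assms by (simp add: smooth_def)
  then show ?case using Cons by (simp add: partial_cmult)
qed

lemma smooth_cmult:
  assumes "smooth F"
  shows "smooth (\<lambda>x. c * F x)"
  using assms unfolding smooth_def dword_cmult[OF assms]
  by (auto intro: differentiable_mult)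


lemma mono_dec:
  assumes "\<beta> i > 0"
  shows "x $ i * mono_fun (dec i \<beta>) x = mono_fun \<beta> x"
proof -
  have "mono_fun (dec i \<beta>) x = (x $ i) ^ (\<beta> i - 1) * (\<Prod>j\<in>UNIV-{i}. (x $ j) ^ \<beta> j)"
    unfolding mono_fun_def dec_def by (simp add: prod.remove[of UNIV i])
  moreover have "mono_fun \<beta> x = (x $ i) ^ \<beta> i * (\<Prod>j\<in>UNIV-{i}. (x $ j) ^ \<beta> j)"
    unfolding mono_fun_def by (simp add: prod.remove[of UNIV i])
  moreover have "x $ i * (x $ i) ^ (\<beta> i - 1) = (x $ i) ^ \<beta> i"
    using assms by (metis Suc_diff_1 power_Suc)
  ultimately show ?thesis by (simp add: mult.assoc)
qed

lemma deg_dec: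
  assumes "\<beta> i > 0"
  shows "deg \<beta> = Suc (deg (dec i \<beta>))"
proof -
  have "deg \<beta> = \<beta> i + (\<Sum>j\<in>UNIV-{i}. \<beta> j)"
    unfolding deg_def by (simp add: sum.remove[of UNIV i])
  moreover have "deg (dec i \<beta>) = (\<beta> i - 1) + (\<Sum>j\<in>UNIV-{i}. \<beta> j)"
    unfolding deg_def dec_def by (simp add: sum.remove[of UNIV i])
  ultimately show ?thesis using assms by simp
qed

lemma dword_append: "dword (v @ u) f = dword v (dword u f)"
  by (induction v) auto

lemma dec_comm: "dec l (dec i \<beta>) = dec i (dec l \<beta>)"
  by (auto simp: dec_def fun_eq_iff)

lemma dec_coef: "real (\<beta> i) * real (dec i \<beta> l) = real (\<beta> l) * real (dec l \<beta> i)"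
  by (cases "i = l") (auto simp: dec_def)

lemma dword_snoc_mono:
  "dword (v @ [l]) (mono_fun \<gamma>) x = real (\<gamma> l) * dword v (mono_fun (dec l \<gamma>)) x"
  by (simp add: dword_append partial_mono dword_smult_mono)

lemma euler:
  "(\<Sum>i\<in>UNIV. real (\<beta> i) * x $ i * dword v (mono_fun (dec i \<beta>)) x)
     = (real (deg \<beta>) - real (length v)) * dword v (mono_fun \<beta>) x"
proof (induction v arbitrary: \<beta> rule: rev_induct)
  case Nil
  have "(\<Sum>i\<in>UNIV. real (\<beta> i) * x $ i * mono_fun (dec i \<beta>) x) = (\<Sum>i\<in>UNIV. real (\<beta> i) * mono_fun \<beta> x)"
  proof (rule sum.cong)
    fix i assume "i \<in> (UNIV :: 'a set)"
    show "real (\<beta> i) * x $ i * mono_fun (dec i \<beta>) x = real (\<beta> i) * mono_fun \<beta> x"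
    proof (cases "\<beta> i = 0")
      case False
      then show ?thesis using mono_dec[of \<beta> i x] by (simp add: mult.assoc)
    qed simp
  qed simp
  also have "\<dots> = real (deg \<beta>) * mono_fun \<beta> x"
    by (simp add: deg_def sum_distrib_right)
  finally show ?case by simp
next
  case (snoc l v)
  have "(\<Sum>i\<in>UNIV. real (\<beta> i) * x $ i * dword (v @ [l]) (mono_fun (dec i \<beta>)) x)
      = (\<Sum>i\<in>UNIV. real (\<beta> l) * (real (dec l \<beta> i) * x $ i * dword v (mono_fun (dec i (dec l \<beta>))) x))"
  proof (rule sum.cong)
    fix i assume "i \<in> (UNIV :: 'a set)"
    have "real (\<beta> i) * x $ i * dword (v @ [l]) (mono_fun (dec i \<beta>)) x
        = (real (\<beta> i) * real (dec i \<beta> l)) * x $ i * dword v (mono_fun (dec l (dec i \<beta>))) x"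
      by (simp add: dword_snoc_mono)
    also have "\<dots> = real (\<beta> l) * (real (dec l \<beta> i) * x $ i * dword v (mono_fun (dec i (dec l \<beta>))) x)"
      using dec_coef[of \<beta> i l] dec_comm[of l i \<beta>] by (simp add: mult.assoc)
    finally show "real (\<beta> i) * x $ i * dword (v @ [l]) (mono_fun (dec i \<beta>)) x
        = real (\<beta> l) * (real (dec l \<beta> i) * x $ i * dword v (mono_fun (dec i (dec l \<beta>))) x)" .
  qed simp
  also have "\<dots> = real (\<beta> l) * ((real (deg (dec l \<beta>)) - real (length v)) * dword v (mono_fun (dec l \<beta>)) x)"
    by (simp only: sum_distrib_left[symmetric] snoc.IH)
  also have "\<dots> = (real (deg \<beta>) - real (length (v @ [l]))) * dword (v @ [l]) (mono_fun \<beta>) x"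
  proof (cases "\<beta> l = 0")
    case True
    then show ?thesis by (simp add: dword_snoc_mono)
  next
    case False
    then have "deg \<beta> = Suc (deg (dec l \<beta>))" by (intro deg_dec) simp
    then show ?thesis by (simp add: dword_snoc_mono algebra_simps)
  qed
  finally show ?case .
qed

lemma key:
  "(\<Sum>i\<in>UNIV. real (\<alpha> i) * x $ i * dword (v @ [l]) (mono_fun (dec i \<alpha>)) x)
     - real (deg \<alpha>) * dword (v @ [l]) (mono_fun \<alpha>) x
   = - (real (length v) + 1) * (real (\<alpha> l) * dword v (mono_fun (dec l \<alpha>)) x)"
  unfolding euler by (simp add: dword_snoc_mono algebra_simps)


definition cnt :: "'n list \<Rightarrow> 'n \<Rightarrow> nat" where
  "cnt xs = (\<lambda>i. count (mset xs) i)"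

lemma coord_prod_mono: "coord_prod xs = mono_fun (cnt xs)"
proof (induction xs)
  case Nil
  show ?case by (simp add: coord_prod_def cnt_def const_mono[symmetric])
next
  case (Cons a xs)
  have d: "dec a (cnt (a # xs)) = cnt xs" by (auto simp: dec_def cnt_def fun_eq_iff)
  show ?case
  proof
    fix x
    have "coord_prod (a # xs) x = x $ a * coord_prod xs x" by (simp add: coord_prod_def)
    also have "\<dots> = x $ a * mono_fun (dec a (cnt (a # xs))) x" using Cons d by simp
    also have "\<dots> = mono_fun (cnt (a # xs)) x" by (rule mono_dec) (simp add: cnt_def)
    finally show "coord_prod (a # xs) x = mono_fun (cnt (a # xs)) x" .
  qed
qed

lemma sum_positions:
  fixes G :: "'n::finite \<Rightarrow> real"
  shows "(\<Sum>j<length xs. G (xs ! j)) = (\<Sum>i\<in>UNIV. real (cnt xs i) * G i)"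
proof (induction xs)
  case Nil
  then show ?case by (simp add: cnt_def)
next
  case (Cons a xs)
  have "(\<Sum>j<length (a # xs). G ((a # xs) ! j)) = G a + (\<Sum>j<length xs. G (xs ! j))"
    unfolding length_Cons sum.lessThan_Suc_shift by simp
  also have "\<dots> = G a + (\<Sum>i\<in>UNIV. real (cnt xs i) * G i)" using Cons by simp
  also have "\<dots> = (\<Sum>i\<in>UNIV. real (cnt xs i) * G i + (if i = a then G i else 0))"
    by (simp add: sum.distrib)
  also have "\<dots> = (\<Sum>i\<in>UNIV. real (cnt (a # xs) i) * G i)"
    by (rule sum.cong) (auto simp: cnt_def algebra_simps)
  finally show ?case .
qed

lemma deg_cnt: "deg (cnt xs) = length xs"
proof -
  have "real (length xs) = real (deg (cnt xs))"
    using sum_positions[of "\<lambda>_. 1" xs] by (simp add: deg_def)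
  then show ?thesis by linarith
qed

lemma mset_rotate1': "mset (rotate1 xs) = mset xs"
  by (cases xs) auto

lemma mset_rotate': "mset (rotate n xs) = mset xs"
  by (induction n) (auto simp: mset_rotate1')

lemma cnt_tl_rot:
  assumes "j < length xs"
  shows "cnt (tl (rotate j xs)) = dec (xs ! j) (cnt xs)"
    and "hd (rotate j xs) = xs ! j"
proof -
  have ne: "xs \<noteq> []" using assms by auto
  show h: "hd (rotate j xs) = xs ! j" using ne assms by (simp add: hd_rotate_conv_nth)
  have "rotate j xs = hd (rotate j xs) # tl (rotate j xs)" using ne by simp
  then have "mset xs = add_mset (xs ! j) (mset (tl (rotate j xs)))"
    by (metis h mset.simps(2) mset_rotate')
  then show "cnt (tl (rotate j xs)) = dec (xs ! j) (cnt xs)"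
    by (auto simp: cnt_def dec_def fun_eq_iff)
qed

lemma cyc_gen:
  "cyc_sum F xs x = (\<Sum>i\<in>UNIV. real (cnt xs i) * F (coord i) (mono_fun (dec i (cnt xs))) x)"
proof -
  have "cyc_sum F xs x = (\<Sum>j<length xs. (\<lambda>i. F (coord i) (mono_fun (dec i (cnt xs))) x) (xs ! j))"
    unfolding cyc_sum_def
    by (rule sum.cong) (auto simp: cnt_tl_rot coord_prod_mono)
  then show ?thesis using sum_positions[of "\<lambda>i. F (coord i) (mono_fun (dec i (cnt xs))) x" xs] by simp
qed

lemma ex_list: "\<exists>xs. cnt xs = (\<alpha> :: 'n::finite \<Rightarrow> nat)"
proof -
  have c: "count (Abs_multiset \<alpha>) = \<alpha>" by (rule count_Abs_multiset) simp
  obtain xs where "mset xs = Abs_multiset \<alpha>" using ex_mset by blast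
  then have "cnt xs = \<alpha>" using c by (simp add: cnt_def)
  then show ?thesis by blast
qed


definition W1 :: "('n list \<times> 'n list) set \<Rightarrow> ('n list \<times> 'n list) set" where
  "W1 W = {uv\<in>W. length (fst uv) = 1}"

definition Dop :: "('n::finite list \<times> 'n list) set \<Rightarrow> ('n list \<times> 'n list \<Rightarrow> real^'n \<Rightarrow> real)
    \<Rightarrow> (real^'n \<Rightarrow> real) \<Rightarrow> real^'n \<Rightarrow> real" where
  "Dop W a f x = (\<Sum>uv\<in>W1 W. (- a uv x / (real (length (snd uv)) + 1)) * dword (snd uv @ fst uv) f x)"

lemma W1_fin: "finite W \<Longrightarrow> finite (W1 W)"
  by (simp add: W1_def)

lemma W1_hd: "uv \<in> W1 W \<Longrightarrow> fst uv = [hd (fst uv)]"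
  by (cases "fst uv") (auto simp: W1_def)

lemma Dop_rec:
  assumes "finite W"
  shows "(\<Sum>i\<in>UNIV. real (\<alpha> i) * x $ i * Dop W a (mono_fun (dec i \<alpha>)) x)
      - real (deg \<alpha>) * Dop W a (mono_fun \<alpha>) x
    = (\<Sum>uv\<in>W1 W. real (\<alpha> (hd (fst uv))) * a uv x * dword (snd uv) (mono_fun (dec (hd (fst uv)) \<alpha>)) x)"
proof -
  let ?c = "\<lambda>uv. - a uv x / (real (length (snd uv)) + 1)"
  let ?w = "\<lambda>uv. snd uv @ fst uv"
  have "(\<Sum>i\<in>UNIV. real (\<alpha> i) * x $ i * Dop W a (mono_fun (dec i \<alpha>)) x)
      = (\<Sum>i\<in>UNIV. \<Sum>uv\<in>W1 W. ?c uv * (real (\<alpha> i) * x $ i * dword (?w uv) (mono_fun (dec i \<alpha>)) x))"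
    unfolding Dop_def by (simp add: sum_distrib_left mult_ac)
  also have "\<dots> = (\<Sum>uv\<in>W1 W. ?c uv * (\<Sum>i\<in>UNIV. real (\<alpha> i) * x $ i * dword (?w uv) (mono_fun (dec i \<alpha>)) x))"
    by (subst sum.swap) (simp add: sum_distrib_left)
  finally have 1: "(\<Sum>i\<in>UNIV. real (\<alpha> i) * x $ i * Dop W a (mono_fun (dec i \<alpha>)) x)
      = (\<Sum>uv\<in>W1 W. ?c uv * (\<Sum>i\<in>UNIV. real (\<alpha> i) * x $ i * dword (?w uv) (mono_fun (dec i \<alpha>)) x))" .
  have 2: "real (deg \<alpha>) * Dop W a (mono_fun \<alpha>) x
      = (\<Sum>uv\<in>W1 W. ?c uv * (real (deg \<alpha>) * dword (?w uv) (mono_fun \<alpha>) x))"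
    unfolding Dop_def by (simp add: sum_distrib_left mult_ac)
  have "(\<Sum>i\<in>UNIV. real (\<alpha> i) * x $ i * Dop W a (mono_fun (dec i \<alpha>)) x)
      - real (deg \<alpha>) * Dop W a (mono_fun \<alpha>) x
      = (\<Sum>uv\<in>W1 W. ?c uv * ((\<Sum>i\<in>UNIV. real (\<alpha> i) * x $ i * dword (?w uv) (mono_fun (dec i \<alpha>)) x)
           - real (deg \<alpha>) * dword (?w uv) (mono_fun \<alpha>) x))"
    unfolding 1 2 right_diff_distrib sum_subtractf by (rule refl)
  also have "\<dots> = (\<Sum>uv\<in>W1 W. real (\<alpha> (hd (fst uv))) * a uv x * dword (snd uv) (mono_fun (dec (hd (fst uv)) \<alpha>)) x)"
  proof (rule sum.cong)
    fix uv assume uv: "uv \<in> W1 W"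
    have w: "?w uv = snd uv @ [hd (fst uv)]" using W1_hd[OF uv] by simp
    have "real (length (snd uv)) + 1 \<noteq> 0" by linarith
    then show "?c uv * ((\<Sum>i\<in>UNIV. real (\<alpha> i) * x $ i * dword (?w uv) (mono_fun (dec i \<alpha>)) x)
           - real (deg \<alpha>) * dword (?w uv) (mono_fun \<alpha>) x)
        = real (\<alpha> (hd (fst uv))) * a uv x * dword (snd uv) (mono_fun (dec (hd (fst uv)) \<alpha>)) x"
      unfolding w key by (simp add: field_simps)
  qed simp
  finally show ?thesis .
qed

lemma bidiff_coord:
  assumes "finite W"
    and pcl: "\<And>c f. smooth f \<Longrightarrow> bidiff_op W a (\<lambda>x. c) f = (\<lambda>x. 0)"
    and g: "smooth g"
  shows "bidiff_op W a (coord i) g x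
    = (\<Sum>uv\<in>W1 W. if fst uv = [i] then a uv x * dword (snd uv) g x else 0)"
proof -
  have z: "(\<Sum>uv\<in>W. a uv x * (if fst uv = [] then 1 else 0) * dword (snd uv) g x) = 0"
    using fun_cong[OF pcl[OF g, of 1], of x]
    by (simp add: bidiff_op_def dword_const case_prod_unfold)
  have "bidiff_op W a (coord i) g x
      = (\<Sum>uv\<in>W. x $ i * (a uv x * (if fst uv = [] then 1 else 0) * dword (snd uv) g x)
           + (if fst uv = [i] then a uv x * dword (snd uv) g x else 0))"
    unfolding bidiff_op_def case_prod_unfold dword_coord
    by (rule sum.cong) auto
  also have "\<dots> = (\<Sum>uv\<in>W. if fst uv = [i] then a uv x * dword (snd uv) g x else 0)"
    by (simp add: sum.distrib z flip: sum_distrib_left)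
  also have "\<dots> = (\<Sum>uv\<in>W1 W. if fst uv = [i] then a uv x * dword (snd uv) g x else 0)"
    unfolding W1_def using assms(1)
    by (simp add: sum.inter_filter) (rule sum.cong, auto)
  finally show ?thesis .
qed

lemma Phi_eq:
  assumes "finite W"
    and pcl: "\<And>c f. smooth f \<Longrightarrow> bidiff_op W a (\<lambda>x. c) f = (\<lambda>x. 0)"
  shows "(\<Sum>i\<in>UNIV. real (\<alpha> i) * bidiff_op W a (coord i) (mono_fun (dec i \<alpha>)) x)
    = (\<Sum>uv\<in>W1 W. real (\<alpha> (hd (fst uv))) * a uv x * dword (snd uv) (mono_fun (dec (hd (fst uv)) \<alpha>)) x)"
proof -
  have "(\<Sum>i\<in>UNIV. real (\<alpha> i) * bidiff_op W a (coord i) (mono_fun (dec i \<alpha>)) x)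
     = (\<Sum>i\<in>UNIV. \<Sum>uv\<in>W1 W. if hd (fst uv) = i then real (\<alpha> i) * a uv x * dword (snd uv) (mono_fun (dec i \<alpha>)) x else 0)"
  proof (rule sum.cong)
    fix i
    have bc: "bidiff_op W a (coord i) (mono_fun (dec i \<alpha>)) x = (\<Sum>uv\<in>W1 W. if fst uv = [i] then a uv x * dword (snd uv) (mono_fun (dec i \<alpha>)) x else 0)"
      by (rule bidiff_coord[OF assms(1) pcl smooth_mono])
    show "real (\<alpha> i) * bidiff_op W a (coord i) (mono_fun (dec i \<alpha>)) x =
      (\<Sum>uv\<in>W1 W. if hd (fst uv) = i then real (\<alpha> i) * a uv x * dword (snd uv) (mono_fun (dec i \<alpha>)) x else 0)"
      unfolding bc sum_distrib_left
    proof (rule sum.cong)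
      fix uv assume "uv \<in> W1 W"
      from W1_hd[OF this] have "(fst uv = [i]) = (hd (fst uv) = i)" by (metis list.inject)
      then show "real (\<alpha> i) * (if fst uv = [i] then a uv x * dword (snd uv) (mono_fun (dec i \<alpha>)) x else 0) =
         (if hd (fst uv) = i then real (\<alpha> i) * a uv x * dword (snd uv) (mono_fun (dec i \<alpha>)) x else 0)"
        by (simp add: mult.assoc)
    qed simp
  qed simp
  also have "\<dots> = (\<Sum>uv\<in>W1 W. \<Sum>i\<in>UNIV. if hd (fst uv) = i then real (\<alpha> i) * a uv x * dword (snd uv) (mono_fun (dec i \<alpha>)) x else 0)"
    by (rule sum.swap)
  also have "\<dots> = (\<Sum>uv\<in>W1 W. real (\<alpha> (hd (fst uv))) * a uv x * dword (snd uv) (mono_fun (dec (hd (fst uv)) \<alpha>)) x)"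
    by (simp add: sum.delta)
  finally show ?thesis .
qed


definition Vset :: "('n list \<times> 'n list) set \<Rightarrow> 'n list set" where
  "Vset W = (\<lambda>uv. snd uv @ fst uv) ` W1 W"

definition bco :: "('n list \<times> 'n list \<Rightarrow> real^'n::finite \<Rightarrow> real) \<Rightarrow> 'n list \<Rightarrow> real^'n \<Rightarrow> real" where
  "bco a w x = - a ([last w], butlast w) x / real (length w)"

lemma bco_eq:
  assumes "uv \<in> W1 W"
  shows "bco a (snd uv @ fst uv) = (\<lambda>x. - a uv x / (real (length (snd uv)) + 1))"
proof -
  have h: "fst uv = [hd (fst uv)]" by (rule W1_hd[OF assms])
  then have "([last (snd uv @ fst uv)], butlast (snd uv @ fst uv)) = uv"
    by (metis append_butlast_last_id butlast_snoc last_snoc prod.collapse)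
  moreover have "length (snd uv @ fst uv) = length (snd uv) + 1" by (subst h) simp
  ultimately show ?thesis unfolding bco_def by (simp add: fun_eq_iff)
qed

lemma inj_W1: "inj_on (\<lambda>uv. snd uv @ fst uv) (W1 W)"
proof (rule inj_onI)
  fix uv uv' assume a: "uv \<in> W1 W" "uv' \<in> W1 W" "snd uv @ fst uv = snd uv' @ fst uv'"
  have "snd uv @ [hd (fst uv)] = snd uv' @ [hd (fst uv')]"
    using a W1_hd[OF a(1)] W1_hd[OF a(2)] by metis
  then have "snd uv = snd uv'" "hd (fst uv) = hd (fst uv')" by auto
  then show "uv = uv'" using W1_hd[OF a(1)] W1_hd[OF a(2)] by (metis prod.expand)
qed

lemma diff_op_Dop:
  "diff_op (Vset W) (bco a) f x = Dop W a f x"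
  unfolding diff_op_def Vset_def Dop_def
  by (subst sum.reindex[OF inj_W1]) (auto simp: bco_eq intro!: sum.cong)

lemma Vset_fin: "finite W \<Longrightarrow> finite (Vset W)"
  by (simp add: Vset_def W1_fin)

lemma bco_smooth:
  assumes "\<And>uv. uv \<in> W \<Longrightarrow> smooth (a uv)" "w \<in> Vset W"
  shows "smooth (bco a w)"
proof -
  obtain uv where uv: "uv \<in> W1 W" "w = snd uv @ fst uv" using assms(2) by (auto simp: Vset_def)
  have e: "bco a w = (\<lambda>x. (- 1 / (real (length (snd uv)) + 1)) * a uv x)"
    using bco_eq[OF uv(1)] uv(2) by (simp add: fun_eq_iff)
  have "smooth (a uv)" using assms(1) uv(1) by (simp add: W1_def)
  then show ?thesis unfolding e by (rule smooth_cmult)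
qed

lemma Dop_const: "Dop W a (\<lambda>x. c) x = 0"
proof -
  have "\<And>uv. uv \<in> W1 W \<Longrightarrow> snd uv @ fst uv \<noteq> []" by (auto simp: W1_def)
  then show ?thesis unfolding Dop_def dword_const by (intro sum.neutral) auto
qed

lemma Dop_lin:
  assumes "finite S"
  shows "Dop W a (\<lambda>x. \<Sum>\<alpha>\<in>S. c \<alpha> * mono_fun \<alpha> x) x = (\<Sum>\<alpha>\<in>S. c \<alpha> * Dop W a (mono_fun \<alpha>) x)"
  unfolding Dop_def dword_lin[OF assms] sum_distrib_left
  by (subst sum.swap) (simp add: mult_ac)


theorem lemma2:
  fixes \<psi> :: "(real^'n::finite \<Rightarrow> real) \<Rightarrow> (real^'n \<Rightarrow> real)"
    and W :: "('n list \<times> 'n list) set"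
    and a :: "'n list \<times> 'n list \<Rightarrow> real^'n \<Rightarrow> real"
  assumes psi_add: "\<And>p q. is_pol p \<Longrightarrow> is_pol q \<Longrightarrow> \<psi> (\<lambda>x. p x + q x) = (\<lambda>x. \<psi> p x + \<psi> q x)"
    and psi_smult: "\<And>c p. is_pol p \<Longrightarrow> \<psi> (\<lambda>x. c * p x) = (\<lambda>x. c * \<psi> p x)"
    and psi_smooth: "\<And>p. is_pol p \<Longrightarrow> smooth (\<psi> p)"
    and psi_one: "\<psi> (\<lambda>x. 1) = (\<lambda>x. 0)"
    and psi_coord: "\<And>i. \<psi> (coord i) = (\<lambda>x. 0)"
    and W_fin: "finite W"
    and a_smooth: "\<And>uv. uv \<in> W \<Longrightarrow> smooth (a uv)"
    and phi_const_l: "\<And>c f. smooth f \<Longrightarrow> bidiff_op W a (\<lambda>x. c) f = (\<lambda>x. 0)"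
    and phi_const_r: "\<And>c f. smooth f \<Longrightarrow> bidiff_op W a f (\<lambda>x. c) = (\<lambda>x. 0)"
    and cyc: "\<And>is. length is \<ge> 2 \<Longrightarrow> cyc_sum (hoch \<psi>) is = cyc_sum (bidiff_op W a) is"
  shows "\<exists>V b. finite V \<and> (\<forall>w\<in>V. smooth (b w))
           \<and> (\<forall>c. diff_op V b (\<lambda>x. c) = (\<lambda>x. 0))
           \<and> (\<forall>p. is_pol p \<longrightarrow> \<psi> p = diff_op V b p)"
proof -
  have cp0: "coord_prod [] = (\<lambda>x. 1)" by (simp add: coord_prod_def fun_eq_iff)
  have cyc_all: "cyc_sum (hoch \<psi>) xs = cyc_sum (bidiff_op W a) xs" for xs :: "'n list"
  proof (cases "length xs \<ge> 2")
    case True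
    then show ?thesis by (rule cyc)
  next
    case False
    then have "xs = [] \<or> (\<exists>l. xs = [l])"
      by (cases xs) (auto simp: Suc_le_eq)
    then show ?thesis
    proof
      assume "xs = []"
      then show ?thesis by (simp add: cyc_sum_def fun_eq_iff)
    next
      assume "\<exists>l. xs = [l]"
      then obtain l where l: "xs = [l]" by blast
      have h: "hoch \<psi> (coord l) (\<lambda>x. 1) = (\<lambda>x. 0)"
        by (simp add: hoch_def psi_one psi_coord fun_eq_iff)
      have b: "bidiff_op W a (coord l) (\<lambda>x. 1) = (\<lambda>x. 0)"
        by (rule phi_const_r[OF smooth_coord])
      show ?thesis unfolding l cyc_sum_def by (simp add: cp0 h b)
    qed
  qed
  have Rpsi: "(\<Sum>i\<in>UNIV. real (\<alpha> i) * x $ i * \<psi> (mono_fun (dec i \<alpha>)) x)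
       - real (deg \<alpha>) * \<psi> (mono_fun \<alpha>) x
     = (\<Sum>i\<in>UNIV. real (\<alpha> i) * bidiff_op W a (coord i) (mono_fun (dec i \<alpha>)) x)" for \<alpha> x
  proof -
    obtain xs where xs: "cnt xs = \<alpha>" using ex_list by blast
    have "(\<Sum>i\<in>UNIV. real (\<alpha> i) * hoch \<psi> (coord i) (mono_fun (dec i \<alpha>)) x)
       = (\<Sum>i\<in>UNIV. real (\<alpha> i) * x $ i * \<psi> (mono_fun (dec i \<alpha>)) x - real (\<alpha> i) * \<psi> (mono_fun \<alpha>) x)"
    proof (rule sum.cong)
      fix i
      show "real (\<alpha> i) * hoch \<psi> (coord i) (mono_fun (dec i \<alpha>)) x
         = real (\<alpha> i) * x $ i * \<psi> (mono_fun (dec i \<alpha>)) x - real (\<alpha> i) * \<psi> (mono_fun \<alpha>) x"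
      proof (cases "\<alpha> i = 0")
        case False
        then have "(\<lambda>y. coord i y * mono_fun (dec i \<alpha>) y) = mono_fun \<alpha>"
          by (simp add: fun_eq_iff coord_def mono_dec)
        then show ?thesis by (simp add: hoch_def psi_coord coord_def algebra_simps)
      qed simp
    qed simp
    also have "\<dots> = (\<Sum>i\<in>UNIV. real (\<alpha> i) * x $ i * \<psi> (mono_fun (dec i \<alpha>)) x) - real (deg \<alpha>) * \<psi> (mono_fun \<alpha>) x"
      by (simp add: sum_subtractf deg_def sum_distrib_right)
    finally show ?thesis
      using fun_cong[OF cyc_all[of xs], of x] unfolding cyc_gen xs by simp
  qed
  have RD: "(\<Sum>i\<in>UNIV. real (\<alpha> i) * x $ i * Dop W a (mono_fun (dec i \<alpha>)) x)
       - real (deg \<alpha>) * Dop W a (mono_fun \<alpha>) x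
     = (\<Sum>i\<in>UNIV. real (\<alpha> i) * bidiff_op W a (coord i) (mono_fun (dec i \<alpha>)) x)" for \<alpha> x
    using Dop_rec[OF W_fin, of \<alpha> x a] Phi_eq[OF W_fin phi_const_l, of \<alpha> x] by simp
  have uniq: "\<psi> (mono_fun \<alpha>) = Dop W a (mono_fun \<alpha>)" for \<alpha>
  proof (induction "deg \<alpha>" arbitrary: \<alpha> rule: less_induct)
    case less
    show ?case
    proof
      fix x
      show "\<psi> (mono_fun \<alpha>) x = Dop W a (mono_fun \<alpha>) x"
      proof (cases "deg \<alpha> = 0")
        case True
        then have "\<alpha> = (\<lambda>j. 0)" by (simp add: deg_def fun_eq_iff)
        then show ?thesis by (simp add: Dop_const psi_one flip: const_mono)
      next
        case False
        have "(\<Sum>i\<in>UNIV. real (\<alpha> i) * x $ i * \<psi> (mono_fun (dec i \<alpha>)) x)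
            = (\<Sum>i\<in>UNIV. real (\<alpha> i) * x $ i * Dop W a (mono_fun (dec i \<alpha>)) x)"
        proof (rule sum.cong)
          fix i
          show "real (\<alpha> i) * x $ i * \<psi> (mono_fun (dec i \<alpha>)) x
              = real (\<alpha> i) * x $ i * Dop W a (mono_fun (dec i \<alpha>)) x"
          proof (cases "\<alpha> i = 0")
            case False
            then have "deg (dec i \<alpha>) < deg \<alpha>" using deg_dec[of \<alpha> i] by simp
            then show ?thesis using less by simp
          qed simp
        qed simp
        then have "real (deg \<alpha>) * \<psi> (mono_fun \<alpha>) x = real (deg \<alpha>) * Dop W a (mono_fun \<alpha>) x"
          using Rpsi[of \<alpha> x] RD[of \<alpha> x] by linarith
        then show ?thesis using False by simp
      qed
    qed
  qed
  have pol_PS: "is_pol (\<lambda>x. \<Sum>\<alpha>\<in>S. c \<alpha> * mono_fun \<alpha> x)" if "finite S" for S c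
    using that unfolding is_pol_def by blast
  have pol_mono: "is_pol (mono_fun \<beta>)" for \<beta>
    using pol_PS[of "{\<beta>}" "\<lambda>_. 1"] by simp
  have pol_smono: "is_pol (\<lambda>x. c * mono_fun \<beta> x)" for \<beta> c
    using pol_PS[of "{\<beta>}" "\<lambda>_. c"] by simp
  have psi_lin: "\<psi> (\<lambda>x. \<Sum>\<alpha>\<in>S. c \<alpha> * mono_fun \<alpha> x) = (\<lambda>x. \<Sum>\<alpha>\<in>S. c \<alpha> * \<psi> (mono_fun \<alpha>) x)"
    if "finite S" for S c
    using that
  proof (induction S rule: finite_induct)
    case empty
    have "\<psi> (\<lambda>x. 0 * mono_fun (\<lambda>j. 0) x) = (\<lambda>x. 0 * \<psi> (mono_fun (\<lambda>j. 0)) x)"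
      by (rule psi_smult[OF pol_mono])
    then show ?case by simp
  next
    case (insert \<beta> S)
    have "\<psi> (\<lambda>x. \<Sum>\<alpha>\<in>insert \<beta> S. c \<alpha> * mono_fun \<alpha> x)
        = \<psi> (\<lambda>x. c \<beta> * mono_fun \<beta> x + (\<Sum>\<alpha>\<in>S. c \<alpha> * mono_fun \<alpha> x))"
      using insert by simp
    also have "\<dots> = (\<lambda>x. \<psi> (\<lambda>x. c \<beta> * mono_fun \<beta> x) x + \<psi> (\<lambda>x. \<Sum>\<alpha>\<in>S. c \<alpha> * mono_fun \<alpha> x) x)"
      by (rule psi_add[OF pol_smono pol_PS[OF insert(1)]])
    also have "\<dots> = (\<lambda>x. \<Sum>\<alpha>\<in>insert \<beta> S. c \<alpha> * \<psi> (mono_fun \<alpha>) x)"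
      using insert by (simp add: psi_smult[OF pol_mono])
    finally show ?case .
  qed
  show ?thesis
  proof (intro exI conjI ballI allI impI)
    show "finite (Vset W)" by (rule Vset_fin[OF W_fin])
  next
    fix w assume "w \<in> Vset W"
    then show "smooth (bco a w)" using bco_smooth[of W a w] a_smooth by blast
  next
    fix c
    show "diff_op (Vset W) (bco a) (\<lambda>x. c) = (\<lambda>x. 0)"
      by (simp add: fun_eq_iff diff_op_Dop Dop_const)
  next
    fix p :: "real^'n \<Rightarrow> real"
    assume "is_pol p"
    then obtain S c where S: "finite S" "p = (\<lambda>x. \<Sum>\<alpha>\<in>S. c \<alpha> * mono_fun \<alpha> x)"
      unfolding is_pol_def by blast
    show "\<psi> p = diff_op (Vset W) (bco a) p"
      unfolding S(2) psi_lin[OF S(1)]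
      by (simp add: fun_eq_iff diff_op_Dop Dop_lin[OF S(1)] uniq)
  qed
qed

end
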